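(* Let $R$ be a commutative ring with identity and let $(S,\leq)$ be a strictly ordered monoid. Suppose $S=S_1\sqcup S_2$ is a disjoint union of subsets $S_1,S_2$. Define $P:[[R^{S,\leq}]]\to[[R^{S,\leq}]]$ by $$P(f)(s)=\begin{cases} f(s), & s\in S_1,\\ 0, & s\in S_2,\end{cases}\qquad f\in [[R^{S,\leq}]],\ s\in S.$$ Then $([[R^{S,\leq}]],P)$ is a Rota-Baxter algebra (of weight $-1$) if and only if $S_1$ and $S_2$ are both subsemigroups of $S$ (i.e. each is closed under the monoid operation).
   Context: All monoids are commutative and written additively with neutral element $0$. An ordered set means a partially ordered set; it is artinian if every strictly decreasing sequence is finite, and narrow if every subset of pairwise incomparable elements is finite. A strictly ordered monoid is a commutative monoid $S$ with a partial order $\leq$ such that $s<s'$ implies $s+t<s'+t$ for all $s,s',t\in S$. The ring of generalized power series $[[R^{S,\leq}]]$ is the set of all maps $f:S\to R$ whose support $\mathrm{supp}(f)=\{s\in S: f(s)\neq 0\}$ is artinian and narrow, with pointwise addition and convolution product $(fg)(s)=\sum_{(u,v)} f(u)g(v)$, the sum over the (finite) set of pairs $(u,v)\in S\times S$ with $u+v=s$, $f(u)\neq0$, $g(v)\neq 0$. A Rota-Baxter algebra (of weight $-1$) is an associative $R$-algebra $A$ with an $R$-linear operator $P:A\to A$ satisfying $P(x)P(y)=P(xP(y))+P(P(x)y)-P(xy)$ for all $x,y\in A$. *)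

theory Defs
  imports Main
begin

definition strict_of :: "('a \<Rightarrow> 'a \<Rightarrow> bool) \<Rightarrow> 'a \<Rightarrow> 'a \<Rightarrow> bool" where
  "strict_of le x y \<longleftrightarrow> le x y \<and> x \<noteq> y"

definition strictly_ordered_monoid :: "('a::comm_monoid_add \<Rightarrow> 'a \<Rightarrow> bool) \<Rightarrow> bool" where
  "strictly_ordered_monoid le \<longleftrightarrow>
     (\<forall>x. le x x) \<and> (\<forall>x y. le x y \<and> le y x \<longrightarrow> x = y) \<and>
     (\<forall>x y z. le x y \<and> le y z \<longrightarrow> le x z) \<and>
     (\<forall>s s' t. strict_of le s s' \<longrightarrow> strict_of le (s + t) (s' + t))"

definition artinian_set :: "('a \<Rightarrow> 'a \<Rightarrow> bool) \<Rightarrow> 'a set \<Rightarrow> bool" where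
  "artinian_set le A \<longleftrightarrow>
     \<not> (\<exists>g::nat \<Rightarrow> 'a. (\<forall>n. g n \<in> A) \<and> (\<forall>n. strict_of le (g (Suc n)) (g n)))"

definition narrow_set :: "('a \<Rightarrow> 'a \<Rightarrow> bool) \<Rightarrow> 'a set \<Rightarrow> bool" where
  "narrow_set le A \<longleftrightarrow>
     (\<forall>B \<subseteq> A. (\<forall>x\<in>B. \<forall>y\<in>B. x \<noteq> y \<longrightarrow> \<not> le x y \<and> \<not> le y x) \<longrightarrow> finite B)"

definition supp_fun :: "('a \<Rightarrow> 'r::zero) \<Rightarrow> 'a set" where
  "supp_fun f = {s. f s \<noteq> 0}"

definition gps :: "('a \<Rightarrow> 'a \<Rightarrow> bool) \<Rightarrow> ('a \<Rightarrow> 'r::zero) set" where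
  "gps le = {f. artinian_set le (supp_fun f) \<and> narrow_set le (supp_fun f)}"

definition gps_mult :: "('a::monoid_add \<Rightarrow> 'r::comm_ring_1) \<Rightarrow> ('a \<Rightarrow> 'r) \<Rightarrow> 'a \<Rightarrow> 'r" where
  "gps_mult f g s = (\<Sum>(u, v) \<in> {(u, v). u + v = s \<and> f u \<noteq> 0 \<and> g v \<noteq> 0}. f u * g v)"

definition gps_rota_baxter ::
  "('a::comm_monoid_add \<Rightarrow> 'a \<Rightarrow> bool) \<Rightarrow> (('a \<Rightarrow> 'r::comm_ring_1) \<Rightarrow> ('a \<Rightarrow> 'r)) \<Rightarrow> bool" where
  "gps_rota_baxter le P \<longleftrightarrow>
     (\<forall>f \<in> gps le. P f \<in> gps le) \<and>
     (\<forall>f \<in> gps le. \<forall>g \<in> gps le. \<forall>c::'r.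
        P (\<lambda>s. c * f s + g s) = (\<lambda>s. c * P f s + P g s)) \<and>
     (\<forall>f \<in> gps le. \<forall>g \<in> gps le.
        gps_mult (P f) (P g) =
          (\<lambda>s. P (gps_mult f (P g)) s + P (gps_mult (P f) g) s - P (gps_mult f g) s))"

definition subsemigroup :: "'a::plus set \<Rightarrow> bool" where
  "subsemigroup A \<longleftrightarrow> (\<forall>x\<in>A. \<forall>y\<in>A. x + y \<in> A)"

end

theory Submission imports Defs "HOL-Library.Ramsey" begin

lemma pwo_subseq:
  assumes som: "strictly_ordered_monoid le"
    and art: "artinian_set le A" and nar: "narrow_set le A"
    and Z: "infinite (Z::nat set)" and xA: "\<And>i. i \<in> Z \<Longrightarrow> x i \<in> A"
  shows "\<exists>Y\<subseteq>Z. infinite Y \<and> (\<forall>i\<in>Y. \<forall>j\<in>Y. i < j \<longrightarrow> le (x i) (x j))"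
proof -
  have refl: "\<And>a. le a a" using som unfolding strictly_ordered_monoid_def by blast
  define f where "f X = (if le (x (Min X)) (x (Max X)) then 0 else if le (x (Max X)) (x (Min X)) then 1 else (2::nat))" for X
  have "\<exists>Y t. Y \<subseteq> Z \<and> infinite Y \<and> t < 3 \<and> (\<forall>a\<in>Y. \<forall>b\<in>Y. a\<noteq>b \<longrightarrow> f {a, b} = t)"
    by (rule Ramsey2[OF Z]) (auto simp: f_def)
  then obtain Y t where Y: "Y \<subseteq> Z" "infinite Y" "t < 3" and hom: "\<And>a b. a\<in>Y \<Longrightarrow> b\<in>Y \<Longrightarrow> a\<noteq>b \<Longrightarrow> f {a, b} = t"
    by blast
  have fab: "f {a, b} = (if le (x a) (x b) then 0 else if le (x b) (x a) then 1 else 2)" if "a < b" for a b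
    using that by (simp add: f_def min_def max_def)
  have fab0: "le (x a) (x b)" if "a < b" "f {a,b} = 0" for a b
    using that(2) unfolding fab[OF that(1)] by (cases "le (x a) (x b)"; cases "le (x b) (x a)") simp_all
  have fab1: "le (x b) (x a) \<and> \<not> le (x a) (x b)" if "a < b" "f {a,b} = 1" for a b
    using that(2) unfolding fab[OF that(1)] by (cases "le (x a) (x b)"; cases "le (x b) (x a)") simp_all
  have fab2: "\<not> le (x a) (x b) \<and> \<not> le (x b) (x a)" if "a < b" "f {a,b} = 2" for a b
    using that(2) unfolding fab[OF that(1)] by (cases "le (x a) (x b)"; cases "le (x b) (x a)") simp_all
  show ?thesis
  proof (cases "t = 0")
    case True
    have "\<forall>i\<in>Y. \<forall>j\<in>Y. i < j \<longrightarrow> le (x i) (x j)"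
    proof (intro ballI impI)
      fix i j assume "i \<in> Y" "j \<in> Y" "i < j"
      then have "f {i,j} = 0" using hom True by auto
      then show "le (x i) (x j)" using fab0 \<open>i<j\<close> by blast
    qed
    then show ?thesis using Y by blast
  next
    case False
    show ?thesis
    proof (cases "t = 1")
      case True
      define g where "g n = x (enumerate Y n)" for n
      have "\<forall>n. g n \<in> A \<and> strict_of le (g (Suc n)) (g n)"
      proof
        fix n
        have lt: "enumerate Y n < enumerate Y (Suc n)" using Y(2) by (simp add: enumerate_step)
        have inY: "enumerate Y n \<in> Y" "enumerate Y (Suc n) \<in> Y" using Y(2) by (simp_all add: enumerate_in_set)
        have "f {enumerate Y n, enumerate Y (Suc n)} = 1" using hom[OF inY] lt True by simp
        then have "le (g (Suc n)) (g n)" "\<not> le (g n) (g (Suc n))"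
          using fab1[OF lt] unfolding g_def by auto
        moreover have "g n \<in> A" using xA inY Y(1) unfolding g_def by blast
        ultimately show "g n \<in> A \<and> strict_of le (g (Suc n)) (g n)"
          unfolding strict_of_def using refl by metis
      qed
      then show ?thesis using art unfolding artinian_set_def by blast
    next
      case False
      with \<open>t \<noteq> 0\<close> Y(3) have t2: "t = 2" by auto
      have inc: "\<not> le (x a) (x b)" if "a \<in> Y" "b \<in> Y" "a \<noteq> b" for a b
      proof (cases "a < b")
        case True
        then show ?thesis using hom[OF that] t2 fab2[OF True] by auto
      next
        case False
        then have "b < a" using that by auto
        then show ?thesis using hom[OF that(2,1)] that t2 fab2[OF \<open>b<a\<close>] by auto
      qed
      have inj: "inj_on x Y" using inc refl by (metis inj_onI)
      have "finite (x ` Y)"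
        using nar unfolding narrow_set_def
        apply (elim allE[of _ "x ` Y"])
        using xA Y(1) inc by blast
      then show ?thesis using inj Y(2) finite_image_iff by blast
    qed
  qed
qed

lemma conv_finite:
  assumes som: "strictly_ordered_monoid le"
    and f: "f \<in> gps le" and g: "g \<in> gps le"
  shows "finite {(u, v). u + v = s \<and> f u \<noteq> 0 \<and> g v \<noteq> 0}"
proof (rule ccontr)
  let ?I = "{(u, v). u + v = s \<and> f u \<noteq> 0 \<and> g v \<noteq> 0}"
  assume "infinite ?I"
  then obtain p :: "nat \<Rightarrow> _" where p: "inj p" "range p \<subseteq> ?I"
    using infinite_iff_countable_subset[of ?I] by meson
  have refl: "\<And>a. le a a" and antis: "\<And>a b. le a b \<Longrightarrow> le b a \<Longrightarrow> a = b"
    and mono: "\<And>a b c. strict_of le a b \<Longrightarrow> strict_of le (a + c) (b + c)"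
  proof -
    have so: "(\<forall>x. le x x) \<and> (\<forall>x y. le x y \<and> le y x \<longrightarrow> x = y) \<and>
     (\<forall>x y z. le x y \<and> le y z \<longrightarrow> le x z) \<and>
     (\<forall>s s' t. strict_of le s s' \<longrightarrow> strict_of le (s + t) (s' + t))"
      using som unfolding strictly_ordered_monoid_def .
    show "\<And>a. le a a" using conjunct1[OF so] by iprover
    show "\<And>a b. le a b \<Longrightarrow> le b a \<Longrightarrow> a = b" using conjunct1[OF conjunct2[OF so]] by iprover
    show "\<And>a b c. strict_of le a b \<Longrightarrow> strict_of le (a + c) (b + c)" using conjunct2[OF conjunct2[OF conjunct2[OF so]]] by iprover
  qed
  have fA: "artinian_set le (supp_fun f)" "narrow_set le (supp_fun f)"
    and gA: "artinian_set le (supp_fun g)" "narrow_set le (supp_fun g)"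
    using f g unfolding gps_def mem_Collect_eq by iprover+
  have pI: "fst (p i) + snd (p i) = s" "fst (p i) \<in> supp_fun f" "snd (p i) \<in> supp_fun g" for i
  proof -
    have "p i \<in> ?I" using p(2) by (rule range_subsetD)
    then show "fst (p i) + snd (p i) = s" "fst (p i) \<in> supp_fun f" "snd (p i) \<in> supp_fun g"
      unfolding supp_fun_def by (cases "p i"; simp)+
  qed
  obtain Y1 where Y1: "Y1 \<subseteq> UNIV" "infinite Y1" "\<forall>i\<in>Y1. \<forall>j\<in>Y1. i < j \<longrightarrow> le (fst (p i)) (fst (p j))"
    using pwo_subseq[OF som fA, of UNIV "\<lambda>i. fst (p i)"] pI by auto
  obtain Y2 where Y2: "Y2 \<subseteq> Y1" "infinite Y2" "\<forall>i\<in>Y2. \<forall>j\<in>Y2. i < j \<longrightarrow> le (snd (p i)) (snd (p j))"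
    using pwo_subseq[OF som gA Y1(2), of "\<lambda>i. snd (p i)"] pI by auto
  define i where "i = enumerate Y2 0"
  define j where "j = enumerate Y2 (Suc 0)"
  have ij: "i < j" "i \<in> Y2" "j \<in> Y2" unfolding i_def j_def using Y2(2)
    by (simp_all add: enumerate_step enumerate_in_set)
  obtain ui vi uj vj where pi: "p i = (ui, vi)" and pj: "p j = (uj, vj)" by fastforce
  have le1: "le ui uj" and le2: "le vi vj" using Y1(3) Y2 ij pi pj by (metis fst_conv snd_conv subsetD)+
  have ne: "(ui, vi) \<noteq> (uj, vj)" using p(1) ij(1) pi pj by (metis inj_eq less_irrefl)
  have si: "ui + vi = s" and sj: "uj + vj = s" using pI[of i] pI[of j] pi pj by auto
  show False
  proof (cases "ui = uj")
    case True
    then have "vi \<noteq> vj" using ne by simp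
    then have "strict_of le (vi + ui) (vj + ui)" using mono le2 unfolding strict_of_def by blast
    then show False using si sj True by (simp add: strict_of_def add.commute)
  next
    case False
    then have st: "strict_of le (ui + vi) (uj + vi)" using mono le1 unfolding strict_of_def by blast
    have "le (uj + vi) (uj + vj)"
    proof (cases "vi = vj")
      case True then show ?thesis using refl by simp
    next
      case False
      then have "strict_of le (vi + uj) (vj + uj)" using mono le2 unfolding strict_of_def by blast
      then show ?thesis by (simp add: strict_of_def add.commute)
    qed
    then show False using st si sj antis unfolding strict_of_def by metis
  qed
qed


lemma conv_sum:
  assumes "finite J" "{(u, v). u + v = s \<and> F u \<noteq> 0 \<and> G v \<noteq> 0} \<subseteq> J"
    and "J \<subseteq> {(u, v). u + v = s}"
  shows "gps_mult F G s = (\<Sum>(u, v)\<in>J. F u * G v)"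
  unfolding gps_mult_def
  by (rule sum.mono_neutral_left[OF assms(1,2)]) (use assms(3) in auto)

lemma artinian_mono: "artinian_set le B \<Longrightarrow> A \<subseteq> B \<Longrightarrow> artinian_set le A"
  unfolding artinian_set_def by blast

lemma narrow_mono: "narrow_set le B \<Longrightarrow> A \<subseteq> B \<Longrightarrow> narrow_set le A"
  unfolding narrow_set_def by (meson order_trans)

lemma delta_gps: "(\<lambda>x. if x = a then (1::'r::comm_ring_1) else 0) \<in> gps le"
proof -
  have sp: "supp_fun (\<lambda>x. if x = a then (1::'r) else 0) = {a}" unfolding supp_fun_def by auto
  have "artinian_set le {a}" unfolding artinian_set_def strict_of_def by auto
  moreover have "narrow_set le {a}" unfolding narrow_set_def by (auto intro: finite_subset)
  ultimately show ?thesis unfolding gps_def using sp by simp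
qed

theorem theorem2p1:
  fixes le :: "'a::comm_monoid_add \<Rightarrow> 'a \<Rightarrow> bool"
    and S1 S2 :: "'a set"
    and P :: "('a \<Rightarrow> 'r::comm_ring_1) \<Rightarrow> ('a \<Rightarrow> 'r)"
  assumes "strictly_ordered_monoid le"
    and "S1 \<union> S2 = UNIV" and "S1 \<inter> S2 = {}"
    and "\<And>f s. P f s = (if s \<in> S1 then f s else 0)"
  shows "gps_rota_baxter le P \<longleftrightarrow> subsemigroup S1 \<and> subsemigroup S2"
proof
  have S2: "\<And>x. x \<in> S2 \<longleftrightarrow> x \<notin> S1" using assms(2,3) by blast
  have Pd: "\<And>f s. P f s = (if s \<in> S1 then f s else 0)" by (rule assms(4))
  assume RB: "gps_rota_baxter le P"
  then have id: "\<And>f g. f \<in> gps le \<Longrightarrow> g \<in> gps le \<Longrightarrow> gps_mult (P f) (P g) =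
          (\<lambda>s. P (gps_mult f (P g)) s + P (gps_mult (P f) g) s - P (gps_mult f g) s)"
    unfolding gps_rota_baxter_def by blast
  define d :: "'a \<Rightarrow> 'a \<Rightarrow> 'r" where "d a = (\<lambda>x. if x = a then 1 else 0)" for a
  have dg: "d a \<in> gps le" for a unfolding d_def by (rule delta_gps)
  have dd: "gps_mult (d a) (d b) (a + b) = 1" for a b
  proof -
    have "gps_mult (d a) (d b) (a + b) = (\<Sum>(u, v)\<in>{(a, b)}. d a u * d b v)"
      by (rule conv_sum) (auto simp: d_def split: if_splits)
    then show ?thesis by (simp add: d_def)
  qed
  have z: "gps_mult F G s = 0" if "\<And>u. F u = 0" for F G :: "'a \<Rightarrow> 'r" and s
  proof -
    have "gps_mult F G s = (\<Sum>(u, v)\<in>{}. F u * G v)" by (rule conv_sum) (auto simp: that)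
    then show ?thesis by simp
  qed
  have z2: "gps_mult F G s = 0" if "\<And>u. G u = 0" for F G :: "'a \<Rightarrow> 'r" and s
  proof -
    have "gps_mult F G s = (\<Sum>(u, v)\<in>{}. F u * G v)" by (rule conv_sum) (auto simp: that)
    then show ?thesis by simp
  qed
  show "subsemigroup S1 \<and> subsemigroup S2"
  proof
    show "subsemigroup S1" unfolding subsemigroup_def
    proof (intro ballI, rule ccontr)
      fix a b assume ab: "a \<in> S1" "b \<in> S1" "a + b \<notin> S1"
      have Pa: "P (d a) = d a" "P (d b) = d b" using ab unfolding Pd d_def by auto
      have "gps_mult (P (d a)) (P (d b)) (a + b) = 0"
        using fun_cong[OF id[OF dg dg, of a b], of "a + b"] ab(3) by (simp add: Pd)
      then show False using dd Pa by simp
    qed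
  next
    show "subsemigroup S2" unfolding subsemigroup_def
    proof (intro ballI, rule ccontr)
      fix a b assume ab0: "a \<in> S2" "b \<in> S2" "a + b \<notin> S2"
      then have ab: "a \<notin> S1" "b \<notin> S1" "\<not> a + b \<notin> S1" using S2 by auto
      have Pa: "P (d a) = (\<lambda>_. 0)" "P (d b) = (\<lambda>_. 0)" using ab unfolding Pd d_def by auto
      have "gps_mult (P (d a)) (P (d b)) (a + b) =
          P (gps_mult (d a) (P (d b))) (a + b) + P (gps_mult (P (d a)) (d b)) (a + b) - P (gps_mult (d a) (d b)) (a + b)"
        using fun_cong[OF id[OF dg dg, of a b], of "a + b"] by simp
      also have "\<dots> = 0 + 0 - 1" using ab(3) unfolding Pa
        by (simp add: Pd z z2 dd)
      finally have "(0::'r) = 0 + 0 - 1" using z Pa by simp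
      then show False by simp
    qed
  qed
next
  have S2: "\<And>x. x \<in> S2 \<longleftrightarrow> x \<notin> S1" using assms(2,3) by blast
  have Pd: "\<And>f s. P f s = (if s \<in> S1 then f s else 0)" by (rule assms(4))
  assume "subsemigroup S1 \<and> subsemigroup S2"
  then have ss: "\<forall>x\<in>S1. \<forall>y\<in>S1. x + y \<in> S1" "\<forall>x\<in>S2. \<forall>y\<in>S2. x + y \<in> S2"
    unfolding subsemigroup_def by simp_all
  have c1: "\<And>x y. x \<in> S1 \<Longrightarrow> y \<in> S1 \<Longrightarrow> x + y \<in> S1" using ss(1) by simp
  have c2: "\<And>x y. x \<notin> S1 \<Longrightarrow> y \<notin> S1 \<Longrightarrow> x + y \<notin> S1"
  proof -
    fix x y assume "x \<notin> S1" "y \<notin> S1"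
    then have "x \<in> S2" "y \<in> S2" using S2 by simp_all
    then have "x + y \<in> S2" using ss(2) by simp
    then show "x + y \<notin> S1" using S2 by simp
  qed
  have Pg: "P f \<in> gps le" if "f \<in> gps le" for f
  proof -
    have "supp_fun (P f) \<subseteq> supp_fun f" unfolding supp_fun_def Pd by auto
    then show ?thesis using that unfolding gps_def using artinian_mono narrow_mono by blast
  qed
  have lin: "P (\<lambda>s. c * f s + g s) = (\<lambda>s. c * P f s + P g s)" for c f g
    by (rule ext) (simp add: Pd)
  have RB: "gps_mult (P f) (P g) =
          (\<lambda>s. P (gps_mult f (P g)) s + P (gps_mult (P f) g) s - P (gps_mult f g) s)"
    if f: "f \<in> gps le" and g: "g \<in> gps le" for f g
  proof
    fix s
    define J where "J = {(u, v). u + v = s \<and> f u \<noteq> 0 \<and> g v \<noteq> 0}"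
    have fin: "finite J" unfolding J_def by (rule conv_finite[OF assms(1) f g])
    have e1: "gps_mult (P f) (P g) s = (\<Sum>(u, v)\<in>J. P f u * P g v)"
      by (rule conv_sum[OF fin]) (auto simp: J_def Pd split: if_splits)
    have e2: "gps_mult f (P g) s = (\<Sum>(u, v)\<in>J. f u * P g v)"
      by (rule conv_sum[OF fin]) (auto simp: J_def Pd split: if_splits)
    have e3: "gps_mult (P f) g s = (\<Sum>(u, v)\<in>J. P f u * g v)"
      by (rule conv_sum[OF fin]) (auto simp: J_def Pd split: if_splits)
    have e4: "gps_mult f g s = (\<Sum>(u, v)\<in>J. f u * g v)"
      by (rule conv_sum[OF fin]) (auto simp: J_def)
    show "gps_mult (P f) (P g) s =
          P (gps_mult f (P g)) s + P (gps_mult (P f) g) s - P (gps_mult f g) s"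
    proof (cases "s \<in> S1")
      case True
      have "(\<Sum>(u, v)\<in>J. P f u * P g v) =
            (\<Sum>(u, v)\<in>J. f u * P g v + P f u * g v - f u * g v)"
      proof (rule sum.cong[OF refl])
        fix x assume "x \<in> J"
        then obtain u v where x: "x = (u, v)" "u + v = s" unfolding J_def by auto
        then have "u \<in> S1 \<or> v \<in> S1" using c2 True by blast
        then show "(case x of (u, v) \<Rightarrow> P f u * P g v) =
              (case x of (u, v) \<Rightarrow> f u * P g v + P f u * g v - f u * g v)"
          unfolding x Pd by (auto simp: algebra_simps)
      qed
      also have "\<dots> = (\<Sum>(u, v)\<in>J. f u * P g v) + (\<Sum>(u, v)\<in>J. P f u * g v) - (\<Sum>(u, v)\<in>J. f u * g v)"
        by (simp add: case_prod_beta sum.distrib sum_subtractf)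
      finally show ?thesis using True e1 e2 e3 e4 by (simp add: Pd)
    next
      case False
      have "(\<Sum>(u, v)\<in>J. P f u * P g v) = 0"
      proof (rule sum.neutral, rule ballI)
        fix x assume "x \<in> J"
        then obtain u v where x: "x = (u, v)" "u + v = s" unfolding J_def by auto
        then have "\<not> (u \<in> S1 \<and> v \<in> S1)" using c1 False by blast
        then show "(case x of (u, v) \<Rightarrow> P f u * P g v) = 0" unfolding x Pd by auto
      qed
      then show ?thesis using False e1 by (simp add: Pd)
    qed
  qed
  show "gps_rota_baxter le P"
    unfolding gps_rota_baxter_def using Pg lin RB by blast
qed

end
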